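(* For every $0 <\delta<1$ there exists $C_\delta>0$ such that $$|\langle y,\overline{\nabla f(x)}\rangle - \langle y', \overline{\nabla f(x')}\rangle|\le C_\delta\, \|f\|_{\mathcal B(B_E)}\Big(\|x- x'\|+\frac{1-\delta}{2}\|y-y'\|\Big)$$ whenever $x,x'\in \delta B_E$, $\|y\|\le 1$, $\|y'\|\le 1$, and $f\in \mathcal B(B_E)$.
   Context: $E$ is a complex Hilbert space of arbitrary dimension with inner product $\langle\cdot,\cdot\rangle$ and open unit ball $B_E$; fix an orthonormal basis $(e_k)$ and set $\overline z=\sum_k\overline{z_k}e_k$ for $z=\sum_k z_ke_k$. For analytic $f:B_E\to\mathbb C$, $\nabla f(x)\in E$ is defined by $f'(x)(y)=\langle y,\overline{\nabla f(x)}\rangle$, so $\langle y,\overline{\nabla f(x)}\rangle=f'(x)(y)$. The Bloch space $\mathcal B(B_E)$ consists of analytic $f$ with $\|f\|_{\mathcal B(B_E)}=\sup_{x\in B_E}(1-\|x\|^2)\|f'(x)\|<\infty$. *)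

theory Defs
  imports "HOL-Analysis.Analysis"
begin

text \<open>A complex Hilbert space E is modelled as a real Hilbert space
  (type class real_inner + complete_space) together with an orthogonal complex
  structure J (multiplication by the imaginary unit). The complex scalar
  multiplication is (a + i b) x = a x + b (J x), the complex inner product is
  determined by the real one, and the norm is the same.\<close>

definition complex_structure :: "('a::real_inner \<Rightarrow> 'a) \<Rightarrow> bool" where
  "complex_structure J \<longleftrightarrow> linear J \<and> (\<forall>x. J (J x) = - x) \<and>
     (\<forall>x y. inner (J x) (J y) = inner x y)"

text \<open>Open unit ball B_E and analyticity on it: f is Frechet differentiable at
  every point of B_E with complex-linear derivative (equivalent to holomorphy
  in Banach spaces).\<close>

definition analytic_ball :: "('a::real_inner \<Rightarrow> 'a) \<Rightarrow> ('a \<Rightarrow> complex) \<Rightarrow> bool" where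
  "analytic_ball J f \<longleftrightarrow>
     (\<forall>x\<in>ball 0 1. \<exists>D. (f has_derivative D) (at x) \<and> (\<forall>y. D (J y) = \<i> * D y))"

text \<open>The derivative f'(x), i.e. y \<mapsto> f'(x)(y) = <y, conj(grad f(x))>.\<close>

definition dF :: "('a::real_normed_vector \<Rightarrow> complex) \<Rightarrow> 'a \<Rightarrow> 'a \<Rightarrow> complex" where
  "dF f x = frechet_derivative f (at x)"

definition bloch_norm :: "('a::real_inner \<Rightarrow> complex) \<Rightarrow> real" where
  "bloch_norm f = (SUP x\<in>ball 0 1. (1 - (norm x)^2) * onorm (dF f x))"

definition bloch_space :: "('a::real_inner \<Rightarrow> 'a) \<Rightarrow> ('a \<Rightarrow> complex) set" where
  "bloch_space J = {f. analytic_ball J f \<and>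
      bdd_above ((\<lambda>x. (1 - (norm x)^2) * onorm (dF f x)) ` ball 0 1)}"

end

theory Submission imports Defs "HOL-Complex_Analysis.Complex_Analysis" begin

definition sc :: "('a::real_inner \<Rightarrow> 'a) \<Rightarrow> complex \<Rightarrow> 'a \<Rightarrow> 'a" where
  "sc J c y = Re c *\<^sub>R y + Im c *\<^sub>R J y"

lemma dF_facts:
  assumes "f \<in> bloch_space J" "z \<in> ball 0 1"
  shows "(f has_derivative dF f z) (at z)" "\<And>y. dF f z (J y) = \<i> * dF f z y"
proof -
  obtain D where D: "(f has_derivative D) (at z)" "\<And>y. D (J y) = \<i> * D y"
    using assms unfolding bloch_space_def analytic_ball_def by blast
  have "D = dF f z" unfolding dF_def using frechet_derivative_at[OF D(1)] .
  then show "(f has_derivative dF f z) (at z)" "\<And>y. dF f z (J y) = \<i> * dF f z y"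
    using D by auto
qed

lemma sc_norm:
  assumes "complex_structure J"
  shows "norm (sc J c y) = cmod c * norm y"
proof -
  have JJ: "inner (J y) (J y) = inner y y" and Jn: "J (J y) = - y"
    using assms unfolding complex_structure_def by auto
  have "inner y (J y) = inner (J y) (J (J y))"
    using assms unfolding complex_structure_def by metis
  also have "\<dots> = - inner (J y) y" using Jn by simp
  finally have o: "inner y (J y) = 0" by (simp add: inner_commute)
  have "(norm (sc J c y))^2 = (Re c)^2 * inner y y + (Im c)^2 * inner (J y) (J y)
       + 2 * Re c * Im c * inner y (J y)"
    unfolding sc_def power2_norm_eq_inner
    by (simp add: inner_add_left inner_add_right inner_commute[of "J y" y] algebra_simps power2_eq_square)
  also have "\<dots> = ((Re c)^2 + (Im c)^2) * (norm y)^2"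
    using JJ o by (simp add: power2_norm_eq_inner algebra_simps)
  also have "\<dots> = (cmod c * norm y)^2"
    by (simp add: cmod_power2 power_mult_distrib)
  finally show ?thesis by (simp add: power2_eq_iff_nonneg)
qed

lemma sc_field_deriv:
  assumes J: "complex_structure J" and f: "f \<in> bloch_space J" and z: "x + sc J \<mu> y \<in> ball 0 1"
  shows "((\<lambda>\<mu>. f (x + sc J \<mu> y)) has_field_derivative dF f (x + sc J \<mu> y) y) (at \<mu>)"
proof -
  let ?z = "x + sc J \<mu> y"
  have bl: "bounded_linear (\<lambda>h. sc J h y)"
    unfolding sc_def
    by (intro bounded_linear_add bounded_linear_compose[OF bounded_linear_scaleR_left bounded_linear_Re]
        bounded_linear_compose[OF bounded_linear_scaleR_left bounded_linear_Im])
  have d1: "((\<lambda>\<mu>. x + sc J \<mu> y) has_derivative (\<lambda>h. sc J h y)) (at \<mu>)"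
    using bl by (auto intro!: derivative_eq_intros bounded_linear.has_derivative[OF bl])
  moreover have d2: "(f has_derivative dF f ?z) (at ?z)" using dF_facts[OF f z] by blast
  ultimately have "((\<lambda>\<mu>. f (x + sc J \<mu> y)) has_derivative (\<lambda>h. dF f ?z (sc J h y))) (at \<mu>)"
    using has_derivative_compose[OF d1 d2] by simp
  moreover have "(\<lambda>h. dF f ?z (sc J h y)) = (\<lambda>h. dF f ?z y * h)"
  proof
    fix h
    have lin: "linear (dF f ?z)" using dF_facts(1)[OF f z] has_derivative_linear by blast
    have "dF f ?z (sc J h y) = Re h *\<^sub>R dF f ?z y + Im h *\<^sub>R dF f ?z (J y)"
      unfolding sc_def[of J h y] by (simp add: linear_add[OF lin] linear_scale[OF lin])
    also have "\<dots> = (complex_of_real (Re h) + \<i> * complex_of_real (Im h)) * dF f ?z y"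
      using dF_facts(2)[OF f z] by (simp add: scaleR_conv_of_real algebra_simps)
    also have "\<dots> = dF f ?z y * h" by (simp add: complex_eq[symmetric] mult.commute)
    finally show "dF f ?z (sc J h y) = dF f ?z y * h" .
  qed
  ultimately show ?thesis unfolding has_field_derivative_def by simp
qed

lemma bloch_bound:
  assumes f: "f \<in> bloch_space J" and z: "z \<in> ball 0 (1::real)"
  shows "onorm (dF f z) \<le> bloch_norm f / (1 - (norm z)^2)"
proof -
  have "(1 - (norm z)^2) * onorm (dF f z) \<le> bloch_norm f"
    unfolding bloch_norm_def using f z unfolding bloch_space_def
    by (intro cSUP_upper) auto
  moreover have "1 - (norm z)^2 > 0" using z by (simp add: abs_square_less_1)
  ultimately show ?thesis by (simp add: field_simps)
qed

lemma bloch_nonneg: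
  assumes f: "f \<in> bloch_space J"
  shows "0 \<le> bloch_norm f"
proof -
  have z: "(0::'a) \<in> ball 0 1" by simp
  have bl: "bounded_linear (dF f 0)" using dF_facts(1)[OF f z] has_derivative_bounded_linear by blast
  have "(1 - (norm (0::'a))^2) * onorm (dF f 0) \<le> bloch_norm f"
    unfolding bloch_norm_def using f z unfolding bloch_space_def
    by (intro cSUP_upper) auto
  then show ?thesis using onorm_pos_le[OF bl] by simp
qed


theorem lemma4p12:
  fixes J :: "'a::{real_inner, complete_space} \<Rightarrow> 'a"
  assumes "complex_structure J"
  shows "\<forall>\<delta>::real. 0 < \<delta> \<and> \<delta> < 1 \<longrightarrow>
    (\<exists>C>0. \<forall>f x x' y y'. f \<in> bloch_space J \<and> norm x < \<delta> \<and> norm x' < \<delta> \<and>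
        norm y \<le> 1 \<and> norm y' \<le> 1 \<longrightarrow>
        cmod (dF f x y - dF f x' y') \<le>
          C * bloch_norm f * (norm (x - x') + (1 - \<delta>) / 2 * norm (y - y')))"
proof (intro allI impI)
  fix \<delta> :: real
  assume d: "0 < \<delta> \<and> \<delta> < 1"
  define r where "r = (1 - \<delta>) / 2"
  define \<rho> where "\<rho> = (1 + \<delta>) / 2"
  have r0: "0 < r" and rho1: "\<rho> < 1" and rhor: "\<rho> = \<delta> + r" and rd: "r < 1 - \<delta>"
    using d by (auto simp: r_def \<rho>_def field_simps)
  have rho0: "0 < \<rho>" using d by (simp add: \<rho>_def)
  have q: "0 < 1 - \<rho>^2" using rho0 rho1 by (simp add: abs_square_less_1)
  define C where "C = 1 / ((1 - \<rho>^2) * r)"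
  have C0: "C > 0" using q r0 by (simp add: C_def)
  show "\<exists>C>0. \<forall>f x x' y y'. f \<in> bloch_space J \<and> norm x < \<delta> \<and> norm x' < \<delta> \<and>
        norm y \<le> 1 \<and> norm y' \<le> 1 \<longrightarrow>
        cmod (dF f x y - dF f x' y') \<le>
          C * bloch_norm f * (norm (x - x') + (1 - \<delta>) / 2 * norm (y - y'))"
  proof (intro exI[of _ C] conjI C0 allI impI)
    fix f :: "'a \<Rightarrow> complex" and x x' y y' :: 'a
    assume H: "f \<in> bloch_space J \<and> norm x < \<delta> \<and> norm x' < \<delta> \<and> norm y \<le> 1 \<and> norm y' \<le> 1"
    then have f: "f \<in> bloch_space J" and nx: "norm x < \<delta>" and nx': "norm x' < \<delta>"
      and ny: "norm y \<le> 1" and ny': "norm y' \<le> 1" by auto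
    define M where "M = bloch_norm f / (1 - \<rho>^2)"
    have b0: "0 \<le> bloch_norm f" using bloch_nonneg[OF f] .
    have M0: "0 \<le> M" using b0 q by (simp add: M_def)
    have Mb: "onorm (dF f z) \<le> M" if "norm z < \<rho>" for z
    proof -
      have z: "z \<in> ball 0 1" using that rho1 by simp
      have "1 - \<rho>^2 \<le> 1 - (norm z)^2"
        using that by (simp add: power_strict_mono less_imp_le power_mono)
      moreover have "0 < 1 - (norm z)^2" using z by (simp add: abs_square_less_1)
      ultimately have "bloch_norm f / (1 - (norm z)^2) \<le> M"
        unfolding M_def using b0 q by (intro divide_left_mono) auto
      then show ?thesis using bloch_bound[OF f z] by linarith
    qed
    have normsc: "norm (p + sc J \<mu> y) < 1" if "norm p < \<delta>" "cmod \<mu> < 1 - \<delta>" for p :: 'a and \<mu>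
    proof -
      have "norm (p + sc J \<mu> y) \<le> norm p + cmod \<mu> * norm y"
        using norm_triangle_ineq[of p "sc J \<mu> y"] sc_norm[OF assms] by simp
      also have "\<dots> \<le> norm p + cmod \<mu>" using ny by (simp add: mult_left_le)
      finally show ?thesis using that by linarith
    qed
    define \<psi> where "\<psi> = (\<lambda>\<mu>. f (x + sc J \<mu> y) - f (x' + sc J \<mu> y))"
    have der: "(\<psi> has_field_derivative (dF f (x + sc J \<mu> y) y - dF f (x' + sc J \<mu> y) y)) (at \<mu>)"
      if "cmod \<mu> < 1 - \<delta>" for \<mu>
      unfolding \<psi>_def
      by (intro DERIV_diff sc_field_deriv[OF assms f]) (use normsc[OF nx that] normsc[OF nx' that] in auto)
    have hol: "\<psi> holomorphic_on ball 0 (1 - \<delta>)"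
      unfolding holomorphic_on_def
    proof
      fix \<mu> assume "\<mu> \<in> ball (0::complex) (1 - \<delta>)"
      then have "cmod \<mu> < 1 - \<delta>" by simp
      then show "\<psi> field_differentiable at \<mu> within ball 0 (1 - \<delta>)"
        using der field_differentiable_at_within field_differentiable_def by blast
    qed
    have hol_r: "\<psi> holomorphic_on ball 0 r"
      using hol by (rule holomorphic_on_subset) (use rd in auto)
    have cont: "continuous_on (cball 0 r) \<psi>"
      using holomorphic_on_imp_continuous_on[OF hol] by (rule continuous_on_subset) (use rd in auto)
    have circ: "norm (\<psi> \<mu>) \<le> M * norm (x - x')" if "norm (0 - \<mu>) = r" for \<mu>
    proof -
      have m: "cmod \<mu> = r" using that by simp
      have inS: "norm (p + sc J \<mu> y) < \<rho>" if "norm p < \<delta>" for p :: 'a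
      proof -
        have "norm (p + sc J \<mu> y) \<le> norm p + cmod \<mu> * norm y"
          using norm_triangle_ineq[of p "sc J \<mu> y"] sc_norm[OF assms] by simp
        also have "\<dots> \<le> norm p + r" using ny m r0 by (simp add: mult_left_le)
        finally show ?thesis using that rhor by linarith
      qed
      have "norm (f (x + sc J \<mu> y) - f (x' + sc J \<mu> y)) \<le> M * norm ((x + sc J \<mu> y) - (x' + sc J \<mu> y))"
      proof (rule differentiable_bound[of "ball 0 \<rho>" f "dF f"])
        show "convex (ball (0::'a) \<rho>)" by simp
        show "(f has_derivative dF f z) (at z within ball 0 \<rho>)" if "z \<in> ball 0 \<rho>" for z
          using dF_facts(1)[OF f, of z] that rho1 has_derivative_at_withinI by auto
        show "onorm (dF f z) \<le> M" if "z \<in> ball 0 \<rho>" for z using Mb that by simp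
        show "x + sc J \<mu> y \<in> ball 0 \<rho>" using inS[OF nx] by simp
        show "x' + sc J \<mu> y \<in> ball 0 \<rho>" using inS[OF nx'] by simp
      qed
      then show ?thesis by (simp add: \<psi>_def)
    qed
    have "norm ((deriv ^^ 1) \<psi> 0) \<le> (fact 1) * (M * norm (x - x')) / r^1"
      by (rule Cauchy_inequality[OF hol_r cont r0 circ])
    moreover have "deriv \<psi> 0 = dF f x y - dF f x' y"
      using DERIV_imp_deriv[OF der[of 0]] d by (simp add: sc_def)
    ultimately have t1: "cmod (dF f x y - dF f x' y) \<le> M * norm (x - x') / r" by simp
    have x'b: "x' \<in> ball 0 1" using nx' d by simp
    have bl: "bounded_linear (dF f x')" using dF_facts(1)[OF f x'b] has_derivative_bounded_linear by blast
    have "cmod (dF f x' (y - y')) \<le> onorm (dF f x') * norm (y - y')" by (rule onorm[OF bl])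
    also have "\<dots> \<le> M * norm (y - y')"
      using Mb[of x'] nx' rhor r0 by (intro mult_right_mono) auto
    finally have t2: "cmod (dF f x' (y - y')) \<le> M * norm (y - y')" .
    have split: "dF f x y - dF f x' y' = (dF f x y - dF f x' y) + dF f x' (y - y')"
      using linear_diff[OF bounded_linear.linear[OF bl]] by simp
    have "cmod (dF f x y - dF f x' y') \<le> M * norm (x - x') / r + M * norm (y - y')"
      unfolding split using norm_triangle_ineq[of "dF f x y - dF f x' y" "dF f x' (y - y')"] t1 t2
      by linarith
    also have "\<dots> = C * bloch_norm f * (norm (x - x') + (1 - \<delta>) / 2 * norm (y - y'))"
    proof -
      have gen: "\<And>Q r b d e::real. Q \<noteq> 0 \<Longrightarrow> r \<noteq> 0 \<Longrightarrow>
         b / Q * d / r + b / Q * e = 1 / (Q * r) * b * (d + r * e)"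
        by (simp add: field_simps)
      show ?thesis unfolding M_def C_def r_def[symmetric]
        by (rule gen) (use q r0 in auto)
    qed
    finally show "cmod (dF f x y - dF f x' y') \<le> C * bloch_norm f * (norm (x - x') + (1 - \<delta>) / 2 * norm (y - y'))" .
  qed
qed

end
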